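(* Let $d$ be a positive integer with $d \notin \{1, 3\}$, let $\mathbb{F}$ be a field, let $D_1 = \mathbb{F}((T))$, and let $D_2$ be a subring of $\overline{\mathbb{F}}^{\mathrm{alg}}((T))$. Consider the game of degree $d$ in which Nora and Wanda choose the polynomial coefficients from $D_1$. If Nora makes the last move, she can ensure that the final polynomial has no root in $D_2$.
   Context: $\mathbb{F}((T))$ denotes the field of formal Laurent series in the variable $T$ with coefficients in $\mathbb{F}$, and $\overline{\mathbb{F}}^{\mathrm{alg}}$ an algebraic closure of $\mathbb{F}$. The game: Nora and Wanda alternately choose coefficients of $f(x) = a_d x^d + \cdots + a_0$; on each move the current player picks a not-yet-chosen coefficient and assigns it a value in $D_1$, subject to $a_d \neq 0$, $a_0 \neq 0$. *)

theory Defs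
  imports "HOL-Algebra.Algebraic_Closure_Type" "HOL-Computational_Algebra.Formal_Laurent_Series"
    "HOL-Computational_Algebra.Polynomial"
begin

lift_definition fls_map_ac :: "'a::field fls \<Rightarrow> 'a alg_closure fls"
  is "\<lambda>f n. to_ac (f n)" by simp

definition is_subring :: "'a::comm_ring_1 set \<Rightarrow> bool" where
  "is_subring S \<longleftrightarrow> 0 \<in> S \<and> 1 \<in> S \<and>
     (\<forall>x\<in>S. \<forall>y\<in>S. x + y \<in> S \<and> x * y \<in> S) \<and> (\<forall>x\<in>S. - x \<in> S)"

(* A game position: c i = None means coefficient a_i not yet chosen;
   c i = Some v means a_i has been set to v.  Only indices i \<le> d matter. *)
definition finished :: "nat \<Rightarrow> (nat \<Rightarrow> 'a option) \<Rightarrow> bool" where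
  "finished d c \<longleftrightarrow> (\<forall>i\<le>d. c i \<noteq> None)"

definition legal_move :: "nat \<Rightarrow> (nat \<Rightarrow> 'a::zero option) \<Rightarrow> nat \<Rightarrow> 'a \<Rightarrow> bool" where
  "legal_move d c i v \<longleftrightarrow> i \<le> d \<and> c i = None \<and> ((i = 0 \<or> i = d) \<longrightarrow> v \<noteq> 0)"

definition final_poly :: "nat \<Rightarrow> (nat \<Rightarrow> 'a::zero option) \<Rightarrow> 'a poly" where
  "final_poly d c = Poly (map (\<lambda>i. the (c i)) [0..<Suc d])"

(* nora_wins d Goal nora_to_move c: from position c, with Nora to move iff
   nora_to_move, Nora has a strategy guaranteeing that the final polynomial
   satisfies Goal. (The game is finite, so the inductive definition is the
   standard backward-induction notion of a winning position.) *)
inductive nora_wins :: "nat \<Rightarrow> ('a::zero poly \<Rightarrow> bool) \<Rightarrow> bool \<Rightarrow> (nat \<Rightarrow> 'a option) \<Rightarrow> bool"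
  for d Goal where
  game_over: "finished d c \<Longrightarrow> Goal (final_poly d c) \<Longrightarrow> nora_wins d Goal b c"
| nora_move: "\<not> finished d c \<Longrightarrow> legal_move d c i v \<Longrightarrow> nora_wins d Goal False (c(i := Some v))
         \<Longrightarrow> nora_wins d Goal True c"
| wanda_move: "\<not> finished d c \<Longrightarrow> (\<And>i v. legal_move d c i v \<Longrightarrow> nora_wins d Goal True (c(i := Some v)))
         \<Longrightarrow> nora_wins d Goal False c"

(* the game has d+1 moves; the player moving first also moves last iff d+1 is odd *)
definition nora_moves_last :: "nat \<Rightarrow> bool \<Rightarrow> bool" where
  "nora_moves_last d nora_first \<longleftrightarrow> (nora_first \<longleftrightarrow> odd (d + 1))"

end

theory Submission
  imports Defs
begin

lemma fls_map_ac_nth [simp]: "fls_nth (fls_map_ac f) n = to_ac (fls_nth f n)"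
  by (simp add: fls_map_ac.rep_eq)

lemma fls_map_ac_eq0 [simp]: "fls_map_ac f = 0 \<longleftrightarrow> f = 0"
  by (metis fls_map_ac_nth fls_nonzero_nth fls_zero_nth to_ac_0 to_ac_eq_iff)

lemma fls_map_ac_0 [simp]: "fls_map_ac 0 = 0"
  by simp

lemma fls_map_ac_subdeg [simp]: "fls_subdegree (fls_map_ac f) = fls_subdegree f"
proof (cases "f = 0")
  case True thus ?thesis by simp
next
  case False
  show ?thesis
    by (rule fls_subdegree_eqI) (use False in auto)
qed

lemma nonroot:
  fixes p :: "'a::field fls poly" and x :: "'a fls"
  assumes x: "x \<noteq> 0" and deg: "degree p \<le> d" and j0: "j0 \<le> d" and c0: "coeff p j0 \<noteq> 0"
    and dom: "\<forall>j\<le>d. j \<noteq> j0 \<longrightarrow> coeff p j \<noteq> 0 \<longrightarrow>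
      fls_subdegree (coeff p j0) + int j0 * fls_subdegree x < fls_subdegree (coeff p j) + int j * fls_subdegree x"
  shows "poly p x \<noteq> 0"
proof
  assume r: "poly p x = 0"
  define s0 where "s0 = fls_subdegree (coeff p j0) + int j0 * fls_subdegree x"
  have "poly p x = (\<Sum>i\<le>degree p. coeff p i * x ^ i)" by (rule poly_altdef)
  also have "\<dots> = (\<Sum>i\<le>d. coeff p i * x ^ i)"
    by (rule sum.mono_neutral_left) (use deg in \<open>auto simp: coeff_eq_0\<close>)
  also have "\<dots> = coeff p j0 * x ^ j0 + (\<Sum>i\<in>{..d} - {j0}. coeff p i * x ^ i)"
    by (rule sum.remove) (use j0 in auto)
  finally have "fls_nth (poly p x) s0 = fls_nth (coeff p j0 * x ^ j0) s0 + (\<Sum>i\<in>{..d} - {j0}. fls_nth (coeff p i * x ^ i) s0)"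
    by (simp add: fls_nth_sum)
  also have "(\<Sum>i\<in>{..d} - {j0}. fls_nth (coeff p i * x ^ i) s0) = 0"
  proof (rule sum.neutral, rule ballI)
    fix i assume "i \<in> {..d} - {j0}"
    hence i: "i \<le> d" "i \<noteq> j0" by auto
    show "fls_nth (coeff p i * x ^ i) s0 = 0"
    proof (cases "coeff p i = 0")
      case True thus ?thesis by simp
    next
      case False
      have "fls_subdegree (coeff p i * x ^ i) = fls_subdegree (coeff p i) + int i * fls_subdegree x"
        using False x by (simp add: fls_subdegree_pow)
      moreover have "s0 < fls_subdegree (coeff p i) + int i * fls_subdegree x"
        using dom i False unfolding s0_def by auto
      ultimately show ?thesis by simp
    qed
  qed
  also have "fls_subdegree (coeff p j0 * x ^ j0) = s0"
    using c0 x by (simp add: fls_subdegree_pow s0_def)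
  hence "fls_nth (coeff p j0 * x ^ j0) s0 \<noteq> 0"
    using c0 x by (metis mult_eq_0_iff nth_fls_subdegree_nonzero power_eq_0_iff)
  ultimately show False using r by simp
qed

lemma valley_int:
  fixes v :: "nat \<Rightarrow> int" and nz :: "nat \<Rightarrow> bool" and N M m :: int
  assumes d: "d \<ge> 1" and i: "i \<le> d" and nz0: "nz 0" and nzd: "nz d" and nzi: "nz i"
   and vi: "v i = -N" and M: "M \<ge> 0" and bnd: "\<forall>j\<le>d. j \<noteq> i \<longrightarrow> \<bar>v j\<bar> \<le> M"
   and N: "N \<ge> 3 * int d * (M+1)"
   and div0: "i > 0 \<Longrightarrow> \<not> int i dvd (N + v 0)"
   and divd: "i < d \<Longrightarrow> \<not> int (d - i) dvd (N + v d)"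
  shows "\<exists>j0\<le>d. nz j0 \<and> (\<forall>j\<le>d. j \<noteq> j0 \<longrightarrow> nz j \<longrightarrow> v j0 + int j0 * m < v j + int j * m)"
proof -
  have dM: "int d * M \<ge> M" using d M by (simp add: mult_right_mono[of 1 "int d" M, simplified])
  have N': "N \<ge> 3 * int d * M + 3 * int d" using N by (simp add: algebra_simps)
  have key: "N - M > int d * (2*M+1)" using N' dM d by (simp add: algebra_simps)
  have Npos: "N - M > 0" using key d M by (smt (verit) mult_nonneg_nonneg of_nat_0_le_iff)
  show ?thesis
  proof (cases "i > 0 \<and> v 0 < v i + int i * m")
    case caseA: True
    hence h1: "int i * m > N + v 0" using vi by linarith
    have v0: "\<bar>v 0\<bar> \<le> M" using bnd caseA by auto
    have mpos: "m > 0"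
    proof (rule ccontr)
      assume "\<not> m > 0"
      hence "int i * m \<le> 0" by (simp add: mult_nonneg_nonpos)
      thus False using h1 v0 Npos by linarith
    qed
    have h2: "int d * m \<ge> int i * m" using i mpos by (simp add: mult_right_mono)
    have "int d * m > int d * (2*M+1)" using h1 h2 key v0 by linarith
    hence h4: "m > 2*M+1" using d by (simp add: mult_less_cancel_left)
    show ?thesis
    proof (rule exI[of _ 0], intro conjI allI impI)
      fix j assume j: "j \<le> d" "j \<noteq> 0" "nz j"
      show "v 0 + int 0 * m < v j + int j * m"
      proof (cases "j = i")
        case True thus ?thesis using caseA by simp
      next
        case False
        hence vj: "\<bar>v j\<bar> \<le> M" using bnd j by auto
        have "int j * m \<ge> 1 * m" using j mpos by (intro mult_right_mono) auto
        thus ?thesis using vj v0 h4 by simp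
      qed
    qed (use nz0 in auto)
  next
    case notA: False
    show ?thesis
    proof (cases "i < d \<and> v d + int d * m < v i + int i * m")
      case True
      hence h1: "int d * m - int i * m < - N - v d" using vi by linarith
      have vd: "\<bar>v d\<bar> \<le> M" using bnd True by auto
      have mneg: "m < 0"
      proof (rule ccontr)
        assume "\<not> m < 0"
        hence "int d * m \<ge> int i * m" using i by (simp add: mult_right_mono)
        thus False using h1 vd Npos by linarith
      qed
      have h2: "int d * (-m) \<ge> int i * m - int d * m"
      proof -
        have "int i * (-m) \<ge> 0" using mneg by (intro mult_nonneg_nonneg) auto
        thus ?thesis by (simp add: algebra_simps)
      qed
      have "int d * (-m) > int d * (2*M+1)" using h1 h2 key vd by linarith
      hence h4: "-m > 2*M+1" using d mult_less_cancel_left_pos[of "int d" "2*M+1" "-m"] by simp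
      show ?thesis
      proof (rule exI[of _ d], intro conjI allI impI)
        fix j assume j: "j \<le> d" "j \<noteq> d" "nz j"
        show "v d + int d * m < v j + int j * m"
        proof (cases "j = i")
          case True thus ?thesis using \<open>i < d \<and> v d + int d * m < v i + int i * m\<close> by simp
        next
          case False
          hence vj: "\<bar>v j\<bar> \<le> M" using bnd j by auto
          have "(int d - int j) * m \<le> 1 * m" using j mneg by (intro mult_right_mono_neg) auto
          hence "int d * m - int j * m \<le> m" by (simp add: algebra_simps)
          thus ?thesis using vj vd h4 by simp
        qed
      qed (use nzd in auto)
    next
      case notB: False
      have A: "i > 0 \<Longrightarrow> v i + int i * m < v 0"
      proof -
        assume ip: "i > 0"
        have "v i + int i * m \<noteq> v 0"
        proof
          assume "v i + int i * m = v 0"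
          hence "N + v 0 = int i * m" using vi by linarith
          thus False using div0 ip by simp
        qed
        thus ?thesis using notA ip by linarith
      qed
      have B: "i < d \<Longrightarrow> v i + int i * m < v d + int d * m"
      proof -
        assume ip: "i < d"
        have "v i + int i * m \<noteq> v d + int d * m"
        proof
          assume "v i + int i * m = v d + int d * m"
          hence "N + v d = int (d - i) * (-m)" using vi ip by (simp add: of_nat_diff algebra_simps)
          thus False using divd ip by simp
        qed
        thus ?thesis using notB ip by linarith
      qed
      show ?thesis
      proof (rule exI[of _ i], intro conjI allI impI)
        fix j assume j: "j \<le> d" "j \<noteq> i" "nz j"
        show "v i + int i * m < v j + int j * m"
        proof (cases "j = 0 \<or> j = d")
          case True thus ?thesis using A B j i by (cases "j = 0") auto
        next
          case False
          hence vj: "\<bar>v j\<bar> \<le> M" and j0: "0 < j" "j < d" using bnd j by auto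
          show ?thesis
          proof (cases "j > i")
            case True
            have Bi: "v i + int i * m < v d + int d * m" using B True j0 by simp
            have vd: "\<bar>v d\<bar> \<le> M" using bnd True j0 by auto
            show ?thesis
            proof (cases "m \<ge> 0")
              case True
              have "int j * m \<ge> int i * m" using \<open>j > i\<close> True by (simp add: mult_right_mono)
              thus ?thesis using vi vj Npos by linarith
            next
              case mneg: False
              show ?thesis
              proof (cases "-m \<le> 2*M+1")
                case True
                have "(int j - int i) * (-m) \<le> int d * (2*M+1)"
                  using True mneg j \<open>j > i\<close> M by (intro mult_mono) auto
                hence "int i * m - int j * m \<le> int d * (2*M+1)" by (simp add: algebra_simps)
                thus ?thesis using key vi vj by linarith
              next
                case False
                have "(int j - int i) * (-m) \<le> (int d - int i - 1) * (-m)"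
                  using mneg j0 by (intro mult_right_mono) auto
                hence "int i * m - int j * m \<le> int i * m - int d * m + m" by (simp add: algebra_simps)
                thus ?thesis using Bi False vi vj vd by linarith
              qed
            qed
          next
            case False
            hence ji: "j < i" using j by simp
            have Ai: "v i + int i * m < v 0" using A ji by simp
            have v0: "\<bar>v 0\<bar> \<le> M" using bnd ji by auto
            show ?thesis
            proof (cases "m \<le> 0")
              case True
              have "int j * m \<ge> int i * m" using ji True by (intro mult_right_mono_neg) auto
              thus ?thesis using vi vj Npos by linarith
            next
              case mpos: False
              show ?thesis
              proof (cases "m \<le> 2*M+1")
                case True
                have "(int i - int j) * m \<le> int d * (2*M+1)"
                  using True mpos ji i M by (intro mult_mono) auto
                hence "int i * m - int j * m \<le> int d * (2*M+1)" by (simp add: algebra_simps)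
                thus ?thesis using key vi vj by linarith
              next
                case False
                have "(int i - int j) * m \<le> (int i - 1) * m"
                  using mpos j0 by (intro mult_right_mono) auto
                hence "int i * m - int j * m \<le> int i * m - m" by (simp add: algebra_simps)
                thus ?thesis using Ai False vi vj v0 by linarith
              qed
            qed
          qed
        qed
      qed (use nzi i in auto)
    qed
  qed
qed

lemma res_one: fixes a C p :: int assumes "a \<ge> 2"
  shows "\<exists>N\<ge>C. (N + p) mod a = 1"
proof (rule exI[of _ "C + ((1 - p - C) mod a)"], intro conjI)
  show "C \<le> C + (1 - p - C) mod a" using assms by simp
  have e: "C + (1 - p - C) mod a + p = (1 - p - C) mod a + (C + p)" by simp
  have "(C + (1 - p - C) mod a + p) mod a = ((1 - p - C) + (C + p)) mod a"
    unfolding e by (rule mod_add_left_eq)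
  also have "\<dots> = 1" using assms by simp
  finally show "(C + (1 - p - C) mod a + p) mod a = 1" .
qed

lemma res_mod1_ndvd: fixes a x :: int assumes "a \<ge> 2" "x mod a = 1" shows "\<not> a dvd x"
proof
  assume "a dvd x" hence "x mod a = 0" by simp
  thus False using assms(2) by simp
qed

lemma res_mod1_ndvd_shift: fixes a x k :: int assumes "a \<ge> 2" "x mod a = 1" shows "\<not> a dvd (x + k * a)"
proof -
  have "(x + k * a) mod a = 1" using assms(2) by simp
  thus ?thesis using res_mod1_ndvd[OF assms(1)] by blast
qed

lemma res_two_consec: fixes a x :: int assumes "a \<ge> 2" shows "\<not> (a dvd x \<and> a dvd (x + 1))"
proof
  assume h: "a dvd x \<and> a dvd (x + 1)"
  hence "a dvd ((x + 1) - x)" by (intro dvd_diff) auto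
  hence "a dvd 1" by simp
  thus False using assms by (simp add: zdvd_imp_le)
qed

lemma res_single: fixes a C p :: int assumes "a \<ge> 2" shows "\<exists>N\<ge>C. \<not> a dvd (N + p)"
proof -
  obtain N where "N \<ge> C" "(N + p) mod a = 1" using res_one[OF assms] by blast
  thus ?thesis using res_mod1_ndvd[OF assms] by blast
qed

lemma res_both: fixes a b C p q :: int assumes a: "a \<ge> 2" and b: "b \<ge> 2" and ab: "a + b \<ge> 5"
  shows "\<exists>N\<ge>C. \<not> a dvd (N + p) \<and> \<not> b dvd (N + q)"
proof (cases "b dvd a")
  case False
  obtain N where N: "N \<ge> C" "(N + p) mod a = 1" using res_one[OF a] by blast
  have n1: "\<not> a dvd (N + p)" using res_mod1_ndvd[OF a N(2)] .
  have n2: "\<not> a dvd ((N + a) + p)"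
    using res_mod1_ndvd_shift[OF a N(2), of 1] by (simp add: algebra_simps)
  have "\<not> (b dvd (N + q) \<and> b dvd ((N + a) + q))"
  proof
    assume "b dvd (N + q) \<and> b dvd ((N + a) + q)"
    hence "b dvd (((N + a) + q) - (N + q))" using dvd_diff by blast
    thus False using False by simp
  qed
  hence "\<not> b dvd (N + q) \<or> \<not> b dvd ((N + a) + q)" by blast
  thus ?thesis
  proof
    assume "\<not> b dvd (N + q)" thus ?thesis using n1 N(1) by blast
  next
    assume "\<not> b dvd ((N + a) + q)" moreover have "N + a \<ge> C" using N a by simp
    ultimately show ?thesis using n2 by blast
  qed
next
  case ba: True
  show ?thesis
  proof (cases "a dvd b")
    case False
    obtain N where N: "N \<ge> C" "(N + q) mod b = 1" using res_one[OF b] by blast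
    have n1: "\<not> b dvd (N + q)" using res_mod1_ndvd[OF b N(2)] .
    have n2: "\<not> b dvd ((N + b) + q)"
      using res_mod1_ndvd_shift[OF b N(2), of 1] by (simp add: algebra_simps)
    have "\<not> (a dvd (N + p) \<and> a dvd ((N + b) + p))"
    proof
      assume "a dvd (N + p) \<and> a dvd ((N + b) + p)"
      hence "a dvd (((N + b) + p) - (N + p))" using dvd_diff by blast
      thus False using False by simp
    qed
    hence "\<not> a dvd (N + p) \<or> \<not> a dvd ((N + b) + p)" by blast
    thus ?thesis
    proof
      assume "\<not> a dvd (N + p)" thus ?thesis using n1 N(1) by blast
    next
      assume "\<not> a dvd ((N + b) + p)" moreover have "N + b \<ge> C" using N b by simp
      ultimately show ?thesis using n2 by blast
    qed
  next
    case True
    have "a = b" using True ba a b by (simp add: zdvd_antisym_nonneg)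
    hence a3: "a \<ge> 3" using ab by simp
    obtain N where N: "N \<ge> C" "(N + p) mod a = 1" using res_one[OF a] by blast
    have n1: "\<not> a dvd (N + p)" using res_mod1_ndvd[OF a N(2)] .
    have n2: "\<not> a dvd ((N + 1) + p)"
    proof
      assume "a dvd ((N + 1) + p)"
      hence "(N + p + 1) mod a = 0" by (simp add: algebra_simps dvd_eq_mod_eq_0)
      moreover have "(N + p + 1) mod a = ((N + p) mod a + 1) mod a" by (simp add: mod_add_left_eq)
      ultimately have "2 mod a = 0" using N(2) by simp
      thus False using a3 by simp
    qed
    have "\<not> (a dvd (N + q) \<and> a dvd (N + q + 1))" using res_two_consec[OF a] .
    hence "\<not> b dvd (N + q) \<or> \<not> b dvd ((N + 1) + q)" using \<open>a = b\<close> by (simp add: algebra_simps)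
    thus ?thesis
    proof
      assume "\<not> b dvd (N + q)" thus ?thesis using n1 N(1) by blast
    next
      assume "\<not> b dvd ((N + 1) + q)" moreover have "N + 1 \<ge> C" using N by simp
      ultimately show ?thesis using n2 by blast
    qed
  qed
qed

definition freeset :: "nat \<Rightarrow> (nat \<Rightarrow> 'a option) \<Rightarrow> nat set" where
  "freeset d c = {i. i \<le> d \<and> c i = None}"

definition badset :: "nat \<Rightarrow> (nat \<Rightarrow> 'a::zero option) \<Rightarrow> nat set" where
  "badset d c = {i \<in> freeset d c. i = 1 \<or> i = d - 1 \<or>
      (d = 4 \<and> i = 2 \<and> (c 1 \<notin> {None, Some 0} \<or> c 3 \<notin> {None, Some 0}))}"

definition ginv :: "nat \<Rightarrow> bool \<Rightarrow> (nat \<Rightarrow> 'a::zero option) \<Rightarrow> bool" where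
  "ginv d b c \<longleftrightarrow> (b \<longleftrightarrow> odd (card (freeset d c))) \<and> c 0 \<noteq> Some 0 \<and> c d \<noteq> Some 0 \<and>
     card (badset d c) \<le> (if b then (card (freeset d c) - 1) div 2 else (card (freeset d c) - 2) div 2)"

lemma finite_freeset [simp]: "finite (freeset d c)"
  by (rule finite_subset[of _ "{..d}"]) (auto simp: freeset_def)

lemma finite_badset [simp]: "finite (badset d c)"
  by (rule finite_subset[of _ "freeset d c"]) (auto simp: badset_def)

lemma badset_sub: "badset d c \<subseteq> freeset d c"
  by (auto simp: badset_def)

lemma finished_iff: "finished d c \<longleftrightarrow> freeset d c = {}"
  by (auto simp: finished_def freeset_def)

lemma legal_iff: "legal_move d c i v \<longleftrightarrow> i \<in> freeset d c \<and> ((i = 0 \<or> i = d) \<longrightarrow> v \<noteq> 0)"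
  by (auto simp: legal_move_def freeset_def)

lemma freeset_upd: "i \<in> freeset d c \<Longrightarrow> freeset d (c(i := Some v)) = freeset d c - {i}"
  by (auto simp: freeset_def)

lemma card_freeset_upd: "i \<in> freeset d c \<Longrightarrow> card (freeset d (c(i := Some v))) = card (freeset d c) - 1"
  by (simp add: freeset_upd)

lemma bad_middle: "d \<ge> 2 \<Longrightarrow> i \<in> badset d c \<Longrightarrow> 0 < i \<and> i < d"
  by (auto simp: badset_def)

lemma badset_upd_sub:
  assumes "i \<in> freeset d c"
  shows "badset d (c(i := Some v)) \<subseteq> (badset d c - {i}) \<union> (if d = 4 \<and> (i = 1 \<or> i = 3) \<and> v \<noteq> 0 then {2} else {})"
  using assms by (auto simp: badset_def freeset_def)

lemma card_badset_upd:
  fixes c :: "nat \<Rightarrow> 'a::zero option"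
  assumes i: "i \<in> freeset d c"
  shows "card (badset d (c(i := Some v))) \<le> card (badset d c)"
    and "i \<in> badset d c \<Longrightarrow> v = 0 \<Longrightarrow> card (badset d (c(i := Some v))) < card (badset d c)"
proof -
  have S: "badset d (c(i := Some v)) \<subseteq> (badset d c - {i}) \<union> (if d = 4 \<and> (i = 1 \<or> i = 3) \<and> v \<noteq> 0 then {2} else {})"
    by (rule badset_upd_sub[OF i])
  show "card (badset d (c(i := Some v))) \<le> card (badset d c)"
  proof (cases "d = 4 \<and> (i = 1 \<or> i = 3) \<and> v \<noteq> 0")
    case True
    hence ib: "i \<in> badset d c" using i by (auto simp: badset_def)
    have "card (badset d (c(i := Some v))) \<le> card (insert 2 (badset d c - {i}))"
      using S True by (intro card_mono) auto
    also have "\<dots> \<le> Suc (card (badset d c - {i}))" by (rule card_insert_le_m1) simp_all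
    also have "\<dots> = card (badset d c)" using ib
      by (simp add: card_Diff_singleton) (metis card_0_eq empty_iff finite_badset not_gr0 Suc_pred)
    finally show ?thesis .
  next
    case False
    have "card (badset d (c(i := Some v))) \<le> card (badset d c - {i})"
      using S False by (intro card_mono) auto
    also have "\<dots> \<le> card (badset d c)" by (rule card_mono) auto
    finally show ?thesis .
  qed
next
  assume ib: "i \<in> badset d c" and v: "v = 0"
  have "card (badset d (c(i := Some v))) \<le> card (badset d c - {i})"
    using badset_upd_sub[OF i, of v] v by (intro card_mono) auto
  also have "\<dots> < card (badset d c)" using ib by (rule card_Diff1_less[OF finite_badset])
  finally show "card (badset d (c(i := Some v))) < card (badset d c)" .
qed

lemma game_main:
  fixes Goal :: "'a::zero_neq_one poly \<Rightarrow> bool"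
  assumes d2: "d \<ge> 2"
    and final: "\<And>c. ginv d True c \<Longrightarrow> card (freeset d c) = 1 \<Longrightarrow>
       \<exists>i v. legal_move d c i v \<and> Goal (final_poly d (c(i := Some v)))"
  shows "\<forall>b c. ginv d b c \<longrightarrow> card (freeset d c) = k \<longrightarrow> k \<ge> 1 \<longrightarrow> nora_wins d Goal b c"
proof (induction k)
  case 0 thus ?case by simp
next
  case (Suc k)
  show ?case
  proof (intro allI impI)
    fix b and c :: "nat \<Rightarrow> 'a option"
    assume inv: "ginv d b c" and card: "card (freeset d c) = Suc k" and "Suc k \<ge> 1"
    have nf: "\<not> finished d c" using card by (auto simp: finished_iff)
    show "nora_wins d Goal b c"
    proof (cases "k = 0")
      case True
      hence b: b using inv card by (simp add: ginv_def)
      obtain i v where lg: "legal_move d c i v" and G: "Goal (final_poly d (c(i := Some v)))"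
        using final[of c] inv card b True by auto
      have "i \<in> freeset d c" using lg by (simp add: legal_iff)
      hence "card (freeset d (c(i := Some v))) = 0" using card True by (simp add: card_freeset_upd)
      hence "finished d (c(i := Some v))" by (simp add: finished_iff)
      hence "nora_wins d Goal False (c(i := Some v))" using G by (rule game_over)
      thus ?thesis using b nf lg by (auto intro: nora_move)
    next
      case k0: False
      show ?thesis
      proof (cases b)
        case True
        hence oddk: "odd (Suc k)" using inv card by (simp add: ginv_def)
        hence k2: "k \<ge> 2" using k0 by presburger
        have bd: "card (badset d c) \<le> k div 2" using inv card True by (simp add: ginv_def)
        obtain i where i: "i \<in> freeset d c" "badset d c \<noteq> {} \<longrightarrow> i \<in> badset d c"
        proof (cases "badset d c = {}")
          case True
          have "freeset d c \<noteq> {}" using card by auto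
          then obtain i where "i \<in> freeset d c" by blast
          thus ?thesis using that True by blast
        next
          case False
          then obtain i where "i \<in> badset d c" by blast
          thus ?thesis using that badset_sub by blast
        qed
        define v :: 'a where "v = (if i \<in> badset d c then 0 else 1)"
        have lg: "legal_move d c i v"
          using i bad_middle[OF d2] by (auto simp: legal_iff v_def)
        let ?c = "c(i := Some v)"
        have cf: "card (freeset d ?c) = k" using i card by (simp add: card_freeset_upd)
        have cb: "card (badset d ?c) \<le> (k - 2) div 2"
        proof (cases "badset d c = {}")
          case True
          hence "card (badset d ?c) = 0" using card_badset_upd(1)[OF i(1), of v] by simp
          thus ?thesis by simp
        next
          case False
          hence "i \<in> badset d c" "v = 0" using i by (auto simp: v_def)
          hence "card (badset d ?c) < card (badset d c)" using card_badset_upd(2)[OF i(1)] by blast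
          thus ?thesis using bd oddk k2 by presburger
        qed
        have ends: "?c 0 \<noteq> Some 0" "?c d \<noteq> Some 0"
          using inv lg by (auto simp: ginv_def legal_iff)
        have "ginv d False ?c" using cf cb ends oddk by (simp add: ginv_def)
        hence "nora_wins d Goal False ?c" using Suc.IH cf k0 by auto
        thus ?thesis using True nf lg by (auto intro: nora_move)
      next
        case False
        hence evk: "even (Suc k)" using inv card by (simp add: ginv_def)
        have bd: "card (badset d c) \<le> (Suc k - 2) div 2" using inv card False by (simp add: ginv_def)
        have "nora_wins d Goal True (c(i := Some v))" if lg: "legal_move d c i v" for i v
        proof -
          let ?c = "c(i := Some v)"
          have i: "i \<in> freeset d c" using lg by (simp add: legal_iff)
          have cf: "card (freeset d ?c) = k" using i card by (simp add: card_freeset_upd)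
          have "card (badset d ?c) \<le> card (badset d c)" by (rule card_badset_upd(1)[OF i])
          hence cb: "card (badset d ?c) \<le> (k - 1) div 2" using bd evk by presburger
          have ends: "?c 0 \<noteq> Some 0" "?c d \<noteq> Some 0"
            using inv lg by (auto simp: ginv_def legal_iff)
          have "ginv d True ?c" using cf cb ends evk by (simp add: ginv_def)
          thus ?thesis using Suc.IH cf k0 by auto
        qed
        thus ?thesis using False nf by (auto intro: wanda_move)
      qed
    qed
  qed
qed

lemma coeff_fp: "coeff (Poly (map a [0..<Suc d])) j = (if j \<le> d then a j else 0)"
  by (simp add: nth_default_def del: upt_Suc)

lemma noroot_from_int:
  fixes a :: "nat \<Rightarrow> 'k::field fls" and x :: "'k alg_closure fls"
  assumes a0: "a 0 \<noteq> 0"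
    and dom: "\<forall>m. \<exists>j0\<le>d. a j0 \<noteq> 0 \<and> (\<forall>j\<le>d. j \<noteq> j0 \<longrightarrow> a j \<noteq> 0 \<longrightarrow>
        fls_subdegree (a j0) + int j0 * m < fls_subdegree (a j) + int j * m)"
  shows "poly (map_poly fls_map_ac (Poly (map a [0..<Suc d]))) x \<noteq> 0"
proof -
  let ?p = "map_poly fls_map_ac (Poly (map a [0..<Suc d]))"
  have cp: "coeff ?p j = (if j \<le> d then fls_map_ac (a j) else 0)" for j
    by (subst coeff_map_poly) (simp_all only: coeff_fp fls_map_ac_0, simp)
  have deg: "degree ?p \<le> d" by (rule degree_le) (auto simp only: cp, simp)
  show ?thesis
  proof (cases "x = 0")
    case True
    have "coeff ?p 0 \<noteq> 0" using a0 by (simp only: cp, simp)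
    thus ?thesis using True by (simp add: poly_0_coeff_0)
  next
    case False
    obtain j0 where j0: "j0 \<le> d" "a j0 \<noteq> 0" and
      dj: "\<forall>j\<le>d. j \<noteq> j0 \<longrightarrow> a j \<noteq> 0 \<longrightarrow>
        fls_subdegree (a j0) + int j0 * fls_subdegree x < fls_subdegree (a j) + int j * fls_subdegree x"
      using dom by blast
    show ?thesis
      by (rule nonroot[OF False deg j0(1)]) (use j0 dj in \<open>simp_all only: cp, auto\<close>)
  qed
qed

lemma final_move:
  fixes c :: "nat \<Rightarrow> 'k::field fls option"
  assumes d2: "d \<ge> 2" and d3: "d \<noteq> 3" and inv: "ginv d True c" and c1: "card (freeset d c) = 1"
  shows "\<exists>i v. legal_move d c i v \<and> (\<forall>x. poly (map_poly fls_map_ac (final_poly d (c(i := Some v)))) x \<noteq> 0)"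
proof -
  obtain i where F: "freeset d c = {i}" using c1 card_1_singletonE by blast
  have id: "i \<le> d" "c i = None" using F by (auto simp: freeset_def)
  have filled: "c j \<noteq> None" if "j \<le> d" "j \<noteq> i" for j using F that by (auto simp: freeset_def)
  have B: "badset d c = {}" using inv c1 by (simp add: ginv_def)
  have i1: "i \<noteq> 1" "i \<noteq> d - 1" using B F by (auto simp: badset_def)
  have i4: "c 1 = Some 0 \<and> c 3 = Some 0" if "d = 4" "i = 2"
  proof -
    have "c 1 \<noteq> None" "c 3 \<noteq> None" using filled that by auto
    moreover have "2 \<notin> badset d c" using B by simp
    ultimately show ?thesis using that F by (auto simp: badset_def)
  qed
  define A where "A j = the (c j)" for j
  have cA: "c j = Some (A j)" if "j \<le> d" "j \<noteq> i" for j using filled[OF that] by (auto simp: A_def)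
  have A0: "A 0 \<noteq> 0" if "i \<noteq> 0" using inv cA[of 0] that by (auto simp: ginv_def)
  have Ad: "A d \<noteq> 0" if "i \<noteq> d" using inv cA[of d] that by (auto simp: ginv_def)
  define M where "M = (\<Sum>j\<in>{..d}-{i}. \<bar>fls_subdegree (A j)\<bar>)"
  have M0: "M \<ge> 0" unfolding M_def by (rule sum_nonneg) simp
  have Mb: "\<forall>j\<le>d. j \<noteq> i \<longrightarrow> \<bar>fls_subdegree (A j)\<bar> \<le> M"
    unfolding M_def by (auto intro!: member_le_sum)
  have fp: "final_poly d (c(i := Some v)) = Poly (map (\<lambda>j. if j = i then v else A j) [0..<Suc d])" for v
    unfolding final_poly_def by (rule arg_cong[where f = Poly], rule map_cong) (auto simp: A_def)
  have valley: "\<exists>v. legal_move d c i v \<and> (\<forall>x. poly (map_poly fls_map_ac (final_poly d (c(i := Some v)))) x \<noteq> 0)"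
    if N: "N \<ge> 3 * int d * (M+1)" and dv0: "i > 0 \<Longrightarrow> \<not> int i dvd (N + fls_subdegree (A 0))"
      and dvd: "i < d \<Longrightarrow> \<not> int (d - i) dvd (N + fls_subdegree (A d))" for N
  proof -
    define v :: "'k fls" where "v = fls_X_intpow (-N)"
    have v0: "v \<noteq> 0" unfolding v_def by (rule fls_X_intpow_nonzero)
    define a where "a j = (if j = i then v else A j)" for j
    have lg: "legal_move d c i v" using id v0 by (simp add: legal_move_def)
    have a0: "a 0 \<noteq> 0" using v0 A0 by (auto simp: a_def)
    have dom: "\<forall>m. \<exists>j0\<le>d. a j0 \<noteq> 0 \<and> (\<forall>j\<le>d. j \<noteq> j0 \<longrightarrow> a j \<noteq> 0 \<longrightarrow>
        fls_subdegree (a j0) + int j0 * m < fls_subdegree (a j) + int j * m)"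
    proof
      fix m
      show "\<exists>j0\<le>d. a j0 \<noteq> 0 \<and> (\<forall>j\<le>d. j \<noteq> j0 \<longrightarrow> a j \<noteq> 0 \<longrightarrow>
        fls_subdegree (a j0) + int j0 * m < fls_subdegree (a j) + int j * m)"
      proof (rule valley_int[where i = i and N = N and M = M])
        show "1 \<le> d" using d2 by simp
        show "i \<le> d" by (rule id)
        show "a 0 \<noteq> 0" by (rule a0)
        show "a d \<noteq> 0" using v0 Ad by (auto simp: a_def)
        show "a i \<noteq> 0" using v0 by (simp add: a_def)
        show "fls_subdegree (a i) = - N" unfolding a_def v_def by (simp only: refl if_True fls_subdegree_fls_X_intpow)
        show "0 \<le> M" by (rule M0)
        show "\<forall>j\<le>d. j \<noteq> i \<longrightarrow> \<bar>fls_subdegree (a j)\<bar> \<le> M" using Mb by (simp add: a_def)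
        show "3 * int d * (M + 1) \<le> N" by (rule N)
        show "\<not> int i dvd N + fls_subdegree (a 0)" if "0 < i" using dv0 that by (simp add: a_def)
        show "\<not> int (d - i) dvd N + fls_subdegree (a d)" if "i < d" using dvd that by (simp add: a_def)
      qed
    qed
    have "\<forall>x. poly (map_poly fls_map_ac (final_poly d (c(i := Some v)))) x \<noteq> 0"
      unfolding fp using noroot_from_int[OF a0 dom] by (simp add: a_def)
    thus ?thesis using lg by blast
  qed
  define C where "C = 3 * int d * (M+1)"
  show ?thesis
  proof (cases "d = 4 \<and> i = 2")
    case True
    hence c13: "c 1 = Some 0" "c 3 = Some 0" using i4 by auto
    have A13: "A 1 = 0" "A 3 = 0" using c13 by (auto simp: A_def)
    show ?thesis
    proof (cases "even (fls_subdegree (A 0) - fls_subdegree (A d))")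
      case True
      obtain N where N: "N \<ge> C" "\<not> 2 dvd (N + fls_subdegree (A 0))"
        using res_single[of 2 C "fls_subdegree (A 0)"] by auto
      have nd: "\<not> 2 dvd (N + fls_subdegree (A d))"
      proof
        assume h: "2 dvd (N + fls_subdegree (A d))"
        from h True have "2 dvd ((N + fls_subdegree (A d)) + (fls_subdegree (A 0) - fls_subdegree (A d)))"
          by (rule dvd_add)
        thus False using N(2) by simp
      qed
      have "\<exists>v. legal_move d c i v \<and> (\<forall>x. poly (map_poly fls_map_ac (final_poly d (c(i := Some v)))) x \<noteq> 0)"
      proof (rule valley[of N])
        show "3 * int d * (M + 1) \<le> N" using N(1) by (simp add: C_def)
        show "\<not> int i dvd N + fls_subdegree (A 0)" using N(2) \<open>d = 4 \<and> i = 2\<close> by simp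
        have "int (d - i) = 2" using \<open>d = 4 \<and> i = 2\<close> by simp
        thus "\<not> int (d - i) dvd N + fls_subdegree (A d)" using nd by simp
      qed
      thus ?thesis by blast
    next
      case False
      define a where "a j = (if j = i then 0 else A j)" for j
      have lg: "legal_move d c i 0" using id True by (simp add: legal_move_def)
      have a0: "a 0 \<noteq> 0" using A0 True by (auto simp: a_def)
      have a4: "a 4 \<noteq> 0" using Ad True by (auto simp: a_def)
      have amid: "a j = 0" if "0 < j" "j < 4" for j
      proof -
        have "j = 1 \<or> j = 2 \<or> j = 3" using that by auto
        thus ?thesis using A13 True by (auto simp: a_def)
      qed
      have dom: "\<forall>m. \<exists>j0\<le>d. a j0 \<noteq> 0 \<and> (\<forall>j\<le>d. j \<noteq> j0 \<longrightarrow> a j \<noteq> 0 \<longrightarrow>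
          fls_subdegree (a j0) + int j0 * m < fls_subdegree (a j) + int j * m)"
      proof
        fix m
        have ne: "fls_subdegree (a 0) \<noteq> fls_subdegree (a 4) + 4 * m"
        proof
          assume "fls_subdegree (a 0) = fls_subdegree (a 4) + 4 * m"
          hence "fls_subdegree (A 0) - fls_subdegree (A d) = 2 * (2 * m)" using True by (simp add: a_def)
          thus False using False by simp
        qed
        have ends: "j = 0 \<or> j = 4" if "j \<le> 4" "a j \<noteq> 0" for j
          using amid[of j] that by force
        show "\<exists>j0\<le>d. a j0 \<noteq> 0 \<and> (\<forall>j\<le>d. j \<noteq> j0 \<longrightarrow> a j \<noteq> 0 \<longrightarrow>
          fls_subdegree (a j0) + int j0 * m < fls_subdegree (a j) + int j * m)"
        proof (cases "fls_subdegree (a 0) < fls_subdegree (a 4) + 4 * m")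
          case lt: True
          show ?thesis
          proof (rule exI[of _ 0], intro conjI allI impI)
            fix j assume j: "j \<le> d" "j \<noteq> 0" "a j \<noteq> 0"
            hence "j = 4" using ends[of j] True by auto
            thus "fls_subdegree (a 0) + int 0 * m < fls_subdegree (a j) + int j * m" using lt by simp
          qed (use a0 in auto)
        next
          case ge: False
          show ?thesis
          proof (rule exI[of _ 4], intro conjI allI impI)
            fix j assume j: "j \<le> d" "j \<noteq> 4" "a j \<noteq> 0"
            hence "j = 0" using ends[of j] True by auto
            thus "fls_subdegree (a 4) + int 4 * m < fls_subdegree (a j) + int j * m" using ge ne by simp
          qed (use a4 True in auto)
        qed
      qed
      have "\<forall>x. poly (map_poly fls_map_ac (final_poly d (c(i := Some 0)))) x \<noteq> 0"
        unfolding fp using noroot_from_int[OF a0 dom] by (simp add: a_def)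
      thus ?thesis using lg by blast
    qed
  next
    case n42: False
    consider "i = 0" | "i = d" | "2 \<le> i \<and> i + 2 \<le> d"
      using id(1) i1 d2 by linarith
    thus ?thesis
    proof cases
      case 1
      obtain N where N: "N \<ge> C" "\<not> int d dvd (N + fls_subdegree (A d))"
        using res_single[of "int d" C "fls_subdegree (A d)"] d2 by auto
      show ?thesis using valley[of N] N 1 by (auto simp: C_def)
    next
      case 2
      obtain N where N: "N \<ge> C" "\<not> int d dvd (N + fls_subdegree (A 0))"
        using res_single[of "int d" C "fls_subdegree (A 0)"] d2 by auto
      show ?thesis using valley[of N] N 2 d2 by (auto simp: C_def)
    next
      case 3
      have d5: "d \<ge> 5" using 3 d3 n42 by auto
      obtain N where N: "N \<ge> C" "\<not> int i dvd (N + fls_subdegree (A 0))"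
          "\<not> int (d - i) dvd (N + fls_subdegree (A d))"
        using res_both[of "int i" "int (d - i)" C "fls_subdegree (A 0)" "fls_subdegree (A d)"] 3 d5
        by (auto simp: of_nat_diff)
      have "\<exists>v. legal_move d c i v \<and> (\<forall>x. poly (map_poly fls_map_ac (final_poly d (c(i := Some v)))) x \<noteq> 0)"
        by (rule valley[of N]) (use N in \<open>simp_all add: C_def\<close>)
      thus ?thesis by blast
    qed
  qed
qed

theorem corollary5:
  fixes d :: nat and nora_first :: bool
    and D2 :: "'k::field alg_closure fls set"
  assumes "d > 0" and "d \<notin> {1, 3}"
    and "is_subring D2"
    and "nora_moves_last d nora_first"
  shows "nora_wins d
           (\<lambda>f :: 'k fls poly. \<not> (\<exists>x\<in>D2. poly (map_poly fls_map_ac f) x = 0))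
           nora_first (\<lambda>_. None)"
proof -
  have d2: "d \<ge> 2" and d3: "d \<noteq> 3" using assms(1,2) by auto
  let ?G = "\<lambda>f :: 'k fls poly. \<not> (\<exists>x\<in>D2. poly (map_poly fls_map_ac f) x = 0)"
  have final: "\<exists>i v. legal_move d c i v \<and> ?G (final_poly d (c(i := Some v)))"
    if "ginv d True c" "card (freeset d c) = 1" for c :: "nat \<Rightarrow> 'k fls option"
    using final_move[OF d2 d3 that] by blast
  let ?c0 = "(\<lambda>_. None) :: nat \<Rightarrow> 'k fls option"
  have fs: "freeset d ?c0 = {..d}" by (auto simp: freeset_def)
  have cf: "card (freeset d ?c0) = Suc d" by (simp add: fs)
  have bs: "badset d ?c0 \<subseteq> {1, d - 1}" by (auto simp: badset_def)
  have cb2: "card (badset d ?c0) \<le> 2"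
  proof -
    have "card (badset d ?c0) \<le> card {1, d - 1}" by (rule card_mono[OF _ bs]) simp
    also have "\<dots> \<le> 2" by (simp add: card_insert_if)
    finally show ?thesis .
  qed
  have cb: "card (badset d ?c0) \<le> (if nora_first then (card (freeset d ?c0) - 1) div 2
                                      else (card (freeset d ?c0) - 2) div 2)"
  proof (cases "d = 2")
    case True
    hence "badset d ?c0 \<subseteq> {1}" using bs by auto
    hence "card (badset d ?c0) \<le> 1" using card_mono[of "{1::nat}" "badset d ?c0"] by simp
    moreover have nora_first using assms(4) True by (simp add: nora_moves_last_def)
    ultimately show ?thesis using True cf by simp
  next
    case False
    hence d4: "d \<ge> 4" using d2 d3 by auto
    show ?thesis
    proof (cases nora_first)
      case True thus ?thesis using cb2 cf d4 by simp
    next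
      case False
      hence "odd d" using assms(4) by (simp add: nora_moves_last_def)
      hence "d \<ge> 5" using d4 by presburger
      thus ?thesis using cb2 cf False by simp
    qed
  qed
  have inv: "ginv d nora_first ?c0"
    using cb cf assms(4) by (simp add: ginv_def nora_moves_last_def)
  have W: "\<forall>b c. ginv d b c \<longrightarrow> card (freeset d c) = Suc d \<longrightarrow> Suc d \<ge> 1 \<longrightarrow> nora_wins d ?G b c"
  proof (rule game_main[OF d2])
    fix c :: "nat \<Rightarrow> 'k fls option"
    assume "ginv d True c" "card (freeset d c) = 1"
    thus "\<exists>i v. legal_move d c i v \<and> ?G (final_poly d (c(i := Some v)))" by (rule final)
  qed
  show ?thesis using W[rule_format, OF inv cf] by simp
qed

end
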